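(* Let $P_t=(T^-_t,T^+_t,N^-_t,N^+_t)^\top$ be the 4-dimensional Hawkes process described in the context, and assume all eigenvalues of $\hat\Phi_0$ have modulus strictly smaller than $1$. Then $$\Lambda:=E(\lambda_t)=(\mathbb I-\hat\Phi_0)^{-1}M .$$ Equivalently, writing $\Lambda=(\Lambda^T,\Lambda^T,\Lambda^N,\Lambda^N)^\top$ and $v=(1,1)^\top$, $$\begin{pmatrix}\Lambda^T\\ \Lambda^T\end{pmatrix}=\mu(\mathbb I+\hat D_0)(\mathbb I-\hat\Phi^N_0)v,\qquad \begin{pmatrix}\Lambda^N\\ \Lambda^N\end{pmatrix}=\mu(\mathbb I+\hat D_0)\hat\Phi^I_0 v,$$ where $\hat D_z=\big((\mathbb I-\hat\Phi^T_z)(\mathbb I-\hat\Phi^N_z)-\hat\Phi^F_z\hat\Phi^I_z\big)^{-1}-\mathbb I$.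
   Context: $P_t$ is a 4-dimensional counting process (multivariate Hawkes process) with conditional intensity $\lambda_t=(\lambda^{T-}_t,\lambda^{T+}_t,\lambda^{N-}_t,\lambda^{N+}_t)^\top$ satisfying $\lambda_t=M+\int_{\mathbb R}\Phi_{t-s}\,dP_s$, where $M=(\mu,\mu,0,0)^\top$, $\mu>0$, and $\Phi_t$ is a $4\times4$ matrix of nonnegative, locally integrable functions supported on $\mathbb R^+$, of block form $\Phi_t=\begin{pmatrix}\Phi^T_t&\Phi^F_t\\ \Phi^I_t&\Phi^N_t\end{pmatrix}$, each $2\times2$ block being $\Phi^?_t=\begin{pmatrix}\phi^{?,s}_t&\phi^{?,c}_t\\ \phi^{?,c}_t&\phi^{?,s}_t\end{pmatrix}$, $?\in\{T,I,N,F\}$. For a function $f$, $\hat f_z=\int e^{-izt}f_t\,dt$, applied entrywise to matrices. $\mathbb I$ is the identity matrix (of size 4 or 2 as appropriate). Under the eigenvalue condition the intensity is stationary; by the symmetry of the kernels $E(\lambda^{T+}_t)=E(\lambda^{T-}_t)=:\Lambda^T$ and $E(\lambda^{N+}_t)=E(\lambda^{N-}_t)=:\Lambda^N$. *)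

theory Defs
  imports "HOL-Probability.Probability" "Jordan_Normal_Form.Gauss_Jordan_Elimination"
    "Jordan_Normal_Form.Char_Poly"
begin

definition blk2 :: "real \<Rightarrow> real \<Rightarrow> real mat" where
  "blk2 s c = mat 2 2 (\<lambda>(i,j). if i = j then s else c)"

text \<open>The 4x4 kernel matrix Phi_t in block form [[Phi^T, Phi^F], [Phi^I, Phi^N]];
  component order (T-, T+, N-, N+) = indices 0,1,2,3.\<close>
definition Phi_mat ::
  "(real \<Rightarrow> real) \<Rightarrow> (real \<Rightarrow> real) \<Rightarrow> (real \<Rightarrow> real) \<Rightarrow> (real \<Rightarrow> real) \<Rightarrow>
   (real \<Rightarrow> real) \<Rightarrow> (real \<Rightarrow> real) \<Rightarrow> (real \<Rightarrow> real) \<Rightarrow> (real \<Rightarrow> real) \<Rightarrow> real \<Rightarrow> real mat" where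
  "Phi_mat Ts Tc Fs Fc Is Ic Ns Nc t =
     four_block_mat (blk2 (Ts t) (Tc t)) (blk2 (Fs t) (Fc t))
                    (blk2 (Is t) (Ic t)) (blk2 (Ns t) (Nc t))"

text \<open>Fourier transform at z = 0, applied entrywise: hat f_0 = integral of f over R.\<close>
definition fhat0 :: "nat \<Rightarrow> (real \<Rightarrow> real mat) \<Rightarrow> real mat" where
  "fhat0 n F = mat n n (\<lambda>(i,j). integral\<^sup>L lborel (\<lambda>t. F t $$ (i,j)))"

text \<open>Conditional intensity lambda_t = M + int_{s<t} Phi_{t-s} dP_s (component i), with the
  counting process given by random counting measures N w j.\<close>
definition hawkes_intensity ::
  "real vec \<Rightarrow> (real \<Rightarrow> real mat) \<Rightarrow> ('w \<Rightarrow> nat \<Rightarrow> real measure) \<Rightarrow> 'w \<Rightarrow> nat \<Rightarrow> real \<Rightarrow> ennreal" where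
  "hawkes_intensity M Phi N w i t =
     ennreal (M $ i) + (\<Sum>j<4. \<integral>\<^sup>+ s\<in>{..<t}. ennreal (Phi (t - s) $$ (i,j)) \<partial>(N w j))"

end

theory Submission
  imports Defs
begin

lemma meas_transfer:
  assumes "sets M = sets (borel :: real measure)" "(f :: real \<Rightarrow> ennreal) \<in> borel_measurable borel"
  shows "f \<in> borel_measurable M"
  using assms(2) unfolding measurable_cong_sets[OF assms(1) refl] .

lemma campbell:
  fixes Pr :: "'w measure" and Nj :: "'w \<Rightarrow> real measure" and L :: ennreal
    and f :: "real \<Rightarrow> ennreal"
  assumes sets: "\<And>w. sets (Nj w) = sets borel"
    and meas: "\<And>A. A \<in> sets borel \<Longrightarrow> (\<lambda>w. emeasure (Nj w) A) \<in> borel_measurable Pr"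
    and mean: "\<And>A. A \<in> sets borel \<Longrightarrow> (\<integral>\<^sup>+ w. emeasure (Nj w) A \<partial>Pr) = L * emeasure lborel A"
    and f: "f \<in> borel_measurable borel"
  shows "(\<lambda>w. \<integral>\<^sup>+ s. f s \<partial>Nj w) \<in> borel_measurable Pr \<and>
         (\<integral>\<^sup>+ w. (\<integral>\<^sup>+ s. f s \<partial>Nj w) \<partial>Pr) = L * (\<integral>\<^sup>+ s. f s \<partial>lborel)"
  using f
proof (induction rule: borel_measurable_induct)
  case (cong f g)
  then have "f = g" by auto
  then show ?case using cong by simp
next
  case (set A)
  have "\<And>w. (\<integral>\<^sup>+ s. indicator A s \<partial>Nj w) = emeasure (Nj w) A"
    using set sets by (simp add: nn_integral_indicator)
  moreover have "(\<integral>\<^sup>+ s. indicator A s \<partial>lborel) = emeasure lborel A"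
    using set by (simp add: nn_integral_indicator)
  ultimately show ?case using meas[OF set] mean[OF set] by simp
next
  case (mult u c)
  have um: "\<And>w. u \<in> borel_measurable (Nj w)"
    by (rule meas_transfer[OF sets mult(2)])
  have e: "\<And>w. (\<integral>\<^sup>+ s. c * u s \<partial>Nj w) = c * (\<integral>\<^sup>+ s. u s \<partial>Nj w)"
    by (rule nn_integral_cmult[OF um])
  have lm: "u \<in> borel_measurable lborel" by (rule meas_transfer[OF sets_lborel mult(2)])
  have im: "(\<lambda>w. \<integral>\<^sup>+ s. u s \<partial>Nj w) \<in> borel_measurable Pr" using mult(4) by blast
  have ie: "(\<integral>\<^sup>+ w. (\<integral>\<^sup>+ s. u s \<partial>Nj w) \<partial>Pr) = L * (\<integral>\<^sup>+ s. u s \<partial>lborel)" using mult(4) by blast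
  show ?case unfolding e
  proof
    show "(\<lambda>w. c * (\<integral>\<^sup>+ s. u s \<partial>Nj w)) \<in> borel_measurable Pr"
      using im by (intro borel_measurable_times_ennreal borel_measurable_const)
    have "(\<integral>\<^sup>+ w. c * (\<integral>\<^sup>+ s. u s \<partial>Nj w) \<partial>Pr) = c * (\<integral>\<^sup>+ w. (\<integral>\<^sup>+ s. u s \<partial>Nj w) \<partial>Pr)"
      by (rule nn_integral_cmult[OF im])
    also have "\<dots> = L * (c * (\<integral>\<^sup>+ s. u s \<partial>lborel))" unfolding ie by (simp only: ac_simps)
    also have "\<dots> = L * (\<integral>\<^sup>+ s. c * u s \<partial>lborel)" by (simp only: nn_integral_cmult[OF lm])
    finally show "(\<integral>\<^sup>+ w. c * (\<integral>\<^sup>+ s. u s \<partial>Nj w) \<partial>Pr) = L * (\<integral>\<^sup>+ s. c * u s \<partial>lborel)" .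
  qed
next
  case (add u v)
  have um: "\<And>w. u \<in> borel_measurable (Nj w)" "\<And>w. v \<in> borel_measurable (Nj w)"
    by (rule meas_transfer[OF sets add(1)], rule meas_transfer[OF sets add(3)])
  have e: "\<And>w. (\<integral>\<^sup>+ s. v s + u s \<partial>Nj w) = (\<integral>\<^sup>+ s. v s \<partial>Nj w) + (\<integral>\<^sup>+ s. u s \<partial>Nj w)"
    by (rule nn_integral_add[OF um(2) um(1)])
  have lm: "u \<in> borel_measurable lborel" "v \<in> borel_measurable lborel"
    by (rule meas_transfer[OF sets_lborel add(1)], rule meas_transfer[OF sets_lborel add(3)])
  have imu: "(\<lambda>w. \<integral>\<^sup>+ s. u s \<partial>Nj w) \<in> borel_measurable Pr" using add(6) by blast
  have ieu: "(\<integral>\<^sup>+ w. (\<integral>\<^sup>+ s. u s \<partial>Nj w) \<partial>Pr) = L * (\<integral>\<^sup>+ s. u s \<partial>lborel)" using add(6) by blast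
  have imv: "(\<lambda>w. \<integral>\<^sup>+ s. v s \<partial>Nj w) \<in> borel_measurable Pr" using add(7) by blast
  have iev: "(\<integral>\<^sup>+ w. (\<integral>\<^sup>+ s. v s \<partial>Nj w) \<partial>Pr) = L * (\<integral>\<^sup>+ s. v s \<partial>lborel)" using add(7) by blast
  show ?case unfolding e
  proof
    show "(\<lambda>w. (\<integral>\<^sup>+ s. v s \<partial>Nj w) + (\<integral>\<^sup>+ s. u s \<partial>Nj w)) \<in> borel_measurable Pr"
      using imu imv by (intro borel_measurable_add)
    have "(\<integral>\<^sup>+ w. (\<integral>\<^sup>+ s. v s \<partial>Nj w) + (\<integral>\<^sup>+ s. u s \<partial>Nj w) \<partial>Pr)
        = (\<integral>\<^sup>+ w. (\<integral>\<^sup>+ s. v s \<partial>Nj w) \<partial>Pr) + (\<integral>\<^sup>+ w. (\<integral>\<^sup>+ s. u s \<partial>Nj w) \<partial>Pr)"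
      by (rule nn_integral_add[OF imv imu])
    also have "\<dots> = L * (\<integral>\<^sup>+ s. v s \<partial>lborel) + L * (\<integral>\<^sup>+ s. u s \<partial>lborel)" unfolding ieu iev ..
    also have "\<dots> = L * (\<integral>\<^sup>+ s. v s + u s \<partial>lborel)"
      by (simp only: nn_integral_add[OF lm(2) lm(1)] distrib_left)
    finally show "(\<integral>\<^sup>+ w. (\<integral>\<^sup>+ s. v s \<partial>Nj w) + (\<integral>\<^sup>+ s. u s \<partial>Nj w) \<partial>Pr) = L * (\<integral>\<^sup>+ s. v s + u s \<partial>lborel)" .
  qed
next
  case (seq U)
  have um: "\<And>w i. U i \<in> borel_measurable (Nj w)"
    by (rule meas_transfer[OF sets seq(1)])
  have lm: "\<And>i. U i \<in> borel_measurable lborel"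
    by (rule meas_transfer[OF sets_lborel seq(1)])
  have e: "\<And>w. (\<integral>\<^sup>+ s. (SUP i. U i) s \<partial>Nj w) = (SUP i. \<integral>\<^sup>+ s. U i s \<partial>Nj w)"
    unfolding SUP_apply by (rule nn_integral_monotone_convergence_SUP[OF seq(3) um])
  have im: "\<And>i. (\<lambda>w. \<integral>\<^sup>+ s. U i s \<partial>Nj w) \<in> borel_measurable Pr" using seq(5) by blast
  have ie: "\<And>i. (\<integral>\<^sup>+ w. (\<integral>\<^sup>+ s. U i s \<partial>Nj w) \<partial>Pr) = L * (\<integral>\<^sup>+ s. U i s \<partial>lborel)" using seq(5) by blast
  have inc: "incseq (\<lambda>i w. \<integral>\<^sup>+ s. U i s \<partial>Nj w)"
    using seq(3) unfolding incseq_def le_fun_def by (auto intro!: nn_integral_mono)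
  have e2: "(\<integral>\<^sup>+ s. (SUP i. U i) s \<partial>lborel) = (SUP i. \<integral>\<^sup>+ s. U i s \<partial>lborel)"
    unfolding SUP_apply by (rule nn_integral_monotone_convergence_SUP[OF seq(3) lm])
  show ?case unfolding e e2
  proof
    show "(\<lambda>w. SUP i. \<integral>\<^sup>+ s. U i s \<partial>Nj w) \<in> borel_measurable Pr"
      using im by (intro borel_measurable_SUP) auto
    have "(\<integral>\<^sup>+ w. (SUP i. \<integral>\<^sup>+ s. U i s \<partial>Nj w) \<partial>Pr) = (SUP i. \<integral>\<^sup>+ w. (\<integral>\<^sup>+ s. U i s \<partial>Nj w) \<partial>Pr)"
      by (rule nn_integral_monotone_convergence_SUP[OF inc im])
    also have "\<dots> = (SUP i. L * (\<integral>\<^sup>+ s. U i s \<partial>lborel))" unfolding ie ..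
    also have "\<dots> = L * (SUP i. \<integral>\<^sup>+ s. U i s \<partial>lborel)" by (rule SUP_mult_left_ennreal[symmetric])
    finally show "(\<integral>\<^sup>+ w. (SUP i. \<integral>\<^sup>+ s. U i s \<partial>Nj w) \<partial>Pr) = L * (SUP i. \<integral>\<^sup>+ s. U i s \<partial>lborel)" .
  qed
qed

lemma mean_lemma:
  fixes Pr :: "'w measure" and lamj :: "'w \<Rightarrow> real \<Rightarrow> ennreal"
  assumes prob: "prob_space Pr"
    and lm: "(\<lambda>(w, t). lamj w t) \<in> borel_measurable (Pr \<Otimes>\<^sub>M lborel)"
    and stat: "\<And>t. (\<integral>\<^sup>+ w. lamj w t \<partial>Pr) = Lj"
    and A: "A \<in> sets borel"
  shows "(\<integral>\<^sup>+ w. (\<integral>\<^sup>+ t\<in>A. lamj w t \<partial>lborel) \<partial>Pr) = Lj * emeasure lborel A"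
proof -
  interpret P: prob_space Pr by fact
  interpret pair_sigma_finite Pr lborel
    by (simp add: pair_sigma_finite_def P.sigma_finite_measure_axioms lborel.sigma_finite_measure_axioms)
  let ?g = "\<lambda>(w, t). lamj w t * indicator A t"
  have gm: "?g \<in> borel_measurable (Pr \<Otimes>\<^sub>M lborel)"
  proof -
    have "(\<lambda>x. lamj (fst x) (snd x) * indicator A (snd x)) \<in> borel_measurable (Pr \<Otimes>\<^sub>M lborel)"
    proof (rule borel_measurable_times_ennreal)
      show "(\<lambda>x. lamj (fst x) (snd x)) \<in> borel_measurable (Pr \<Otimes>\<^sub>M lborel)"
        using lm by (simp add: case_prod_beta')
      show "(\<lambda>x. indicator A (snd x) :: ennreal) \<in> borel_measurable (Pr \<Otimes>\<^sub>M lborel)"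
        using A by measurable
    qed
    then show ?thesis by (simp add: case_prod_beta')
  qed
  have "(\<integral>\<^sup>+ w. (\<integral>\<^sup>+ t. lamj w t * indicator A t \<partial>lborel) \<partial>Pr) = integral\<^sup>N (Pr \<Otimes>\<^sub>M lborel) ?g"
    using lborel.nn_integral_fst[OF gm] by simp
  also have "\<dots> = (\<integral>\<^sup>+ t. (\<integral>\<^sup>+ w. lamj w t * indicator A t \<partial>Pr) \<partial>lborel)"
    using nn_integral_snd[OF gm] by simp
  also have "\<dots> = (\<integral>\<^sup>+ t. Lj * indicator A t \<partial>lborel)"
  proof (rule nn_integral_cong)
    fix t
    have "(\<lambda>w. lamj w t) \<in> borel_measurable Pr"
      using measurable_compose[OF measurable_Pair2'[of t lborel Pr] lm] by simp
    then show "(\<integral>\<^sup>+ w. lamj w t * indicator A t \<partial>Pr) = Lj * indicator A t"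
      by (simp add: nn_integral_multc stat)
  qed
  also have "\<dots> = Lj * emeasure lborel A"
    using A by (simp add: nn_integral_cmult_indicator)
  finally show ?thesis .
qed

lemma kernel_int:
  fixes g :: "real \<Rightarrow> real"
  assumes gm: "g \<in> borel_measurable borel" and nn: "\<forall>t. 0 \<le> g t" and z: "\<forall>t<0. g t = 0"
    and gi: "integrable lborel g"
  shows "(\<integral>\<^sup>+ s. ennreal (g (0 - s)) * indicator {..<0} s \<partial>lborel) = ennreal (integral\<^sup>L lborel g)"
proof -
  let ?F = "\<lambda>t. ennreal (g t) * indicator {0<..} t"
  have Fm: "?F \<in> borel_measurable borel" using gm by measurable
  have "(\<integral>\<^sup>+ s. ennreal (g (0 - s)) * indicator {..<0} s \<partial>lborel) = (\<integral>\<^sup>+ s. ?F (- s) \<partial>lborel)"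
    by (intro nn_integral_cong) (auto simp: indicator_def)
  also have "\<dots> = (\<integral>\<^sup>+ s. ?F s \<partial>(distr lborel borel uminus))"
    using Fm by (subst nn_integral_distr) auto
  also have "\<dots> = (\<integral>\<^sup>+ s. ?F s \<partial>lborel)" by (simp only: lborel_distr_uminus)
  also have "\<dots> = (\<integral>\<^sup>+ s. ennreal (g s) \<partial>lborel)"
    by (intro nn_integral_cong_AE eventually_mono[OF AE_lborel_singleton[of 0]])
       (auto simp: indicator_def z not_less_iff_gr_or_eq)
  also have "\<dots> = ennreal (integral\<^sup>L lborel g)"
    using gi nn by (intro nn_integral_eq_integral) auto
  finally show ?thesis .
qed

lemma sum4: "(\<Sum>k\<in>{0..<4::nat}. f k) = f 0 + f 1 + f 2 + f 3"
  by (simp add: eval_nat_numeral)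
lemma sum2: "(\<Sum>k\<in>{0..<2::nat}. f k) = f 0 + f 1"
  by (simp add: eval_nat_numeral)
lemma less4: "(i::nat) < 4 \<longleftrightarrow> i = 0 \<or> i = 1 \<or> i = 2 \<or> i = 3" by auto
lemma less2: "(i::nat) < 2 \<longleftrightarrow> i = 0 \<or> i = 1" by auto

definition "m4 (xs :: real list list) = mat 4 4 (\<lambda>(i,j). xs ! i ! j)"
definition "v4 (xs :: real list) = vec 4 (\<lambda>i. xs ! i)"

lemma m4_mult_v4: "m4 [[a00,a01,a02,a03],[a10,a11,a12,a13],[a20,a21,a22,a23],[a30,a31,a32,a33]] *\<^sub>v v4 [x0,x1,x2,x3]
  = v4 [a00*x0+a01*x1+a02*x2+a03*x3, a10*x0+a11*x1+a12*x2+a13*x3, a20*x0+a21*x1+a22*x2+a23*x3, a30*x0+a31*x1+a32*x2+a33*x3]"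
  unfolding m4_def v4_def
  by (rule eq_vecI) (auto simp: scalar_prod_def sum4 less4)

lemma v4_eq: "v4 [a,b,c,d] = v4 [a',b',c',d'] \<longleftrightarrow> a = a' \<and> b = b' \<and> c = c' \<and> d = d'"
  unfolding v4_def
  apply (rule iffI)
   apply (drule arg_cong[where f = "\<lambda>v::real Matrix.vec. (v $ 0, v $ 1, v $ 2, v $ 3)"]) apply simp
  apply simp
  done

definition "m2 (xs :: real list list) = mat 2 2 (\<lambda>(i,j). xs ! i ! j)"
definition "v2 (xs :: real list) = vec 2 (\<lambda>i. xs ! i)"

lemma m2_mult: "m2 [[a,b],[c,d]] * m2 [[e,f],[g,h]] = m2 [[a*e+b*g, a*f+b*h],[c*e+d*g, c*f+d*h]]"
  unfolding m2_def by (rule eq_matI) (auto simp: scalar_prod_def sum2 less2 row_def col_def)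
lemma m2_minus: "m2 [[a,b],[c,d]] - m2 [[e,f],[g,h]] = m2 [[a-e, b-f],[c-g, d-h]]"
  unfolding m2_def by (rule eq_matI) (auto simp: less2)
lemma m2_plus: "m2 [[a,b],[c,d]] + m2 [[e,f],[g,h]] = m2 [[a+e, b+f],[c+g, d+h]]"
  unfolding m2_def by (rule eq_matI) (auto simp: less2)
lemma one2: "1\<^sub>m 2 = m2 [[1,0],[0,1]]"
  unfolding m2_def by (rule eq_matI) (auto simp: less2)
lemma one4: "1\<^sub>m 4 = m4 [[1,0,0,0],[0,1,0,0],[0,0,1,0],[0,0,0,1]]"
  unfolding m4_def by (rule eq_matI) (auto simp: less4)
lemma m4_minus: "m4 [[a00,a01,a02,a03],[a10,a11,a12,a13],[a20,a21,a22,a23],[a30,a31,a32,a33]]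
  - m4 [[b00,b01,b02,b03],[b10,b11,b12,b13],[b20,b21,b22,b23],[b30,b31,b32,b33]]
  = m4 [[a00-b00,a01-b01,a02-b02,a03-b03],[a10-b10,a11-b11,a12-b12,a13-b13],[a20-b20,a21-b21,a22-b22,a23-b23],[a30-b30,a31-b31,a32-b32,a33-b33]]"
  unfolding m4_def by (rule eq_matI) (auto simp: less4)
lemma m2_mult_v2: "m2 [[a,b],[c,d]] *\<^sub>v v2 [x,y] = v2 [a*x+b*y, c*x+d*y]"
  unfolding m2_def v2_def by (rule eq_vecI) (auto simp: scalar_prod_def sum2 less2)
lemma v2_eq: "v2 [a,b] = v2 [a',b'] \<longleftrightarrow> a = a' \<and> b = b'"
  unfolding v2_def
  apply (rule iffI)
   apply (drule arg_cong[where f = "\<lambda>v::real Matrix.vec. (v $ 0, v $ 1)"]) apply simp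
  apply simp
  done
lemma smult_v2: "a \<cdot>\<^sub>v v2 [x,y] = v2 [a*x, a*y]"
  unfolding v2_def by (rule eq_vecI) (auto simp: less2)
lemma blk2_m2: "blk2 s c = m2 [[s,c],[c,s]]"
  unfolding blk2_def m2_def by (rule eq_matI) (auto simp: less2)
lemma carrier_m2[simp]: "m2 xs \<in> carrier_mat 2 2" unfolding m2_def by simp
lemma carrier_m4[simp]: "m4 xs \<in> carrier_mat 4 4" unfolding m4_def by simp
lemma carrier_v2[simp]: "v2 xs \<in> carrier_vec 2" unfolding v2_def by simp
lemma carrier_v4[simp]: "v4 xs \<in> carrier_vec 4" unfolding v4_def by simp
lemma v4_expand: "v \<in> carrier_vec 4 \<Longrightarrow> v = v4 [v $ 0, v $ 1, v $ 2, v $ 3]"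
  unfolding v4_def by (rule eq_vecI) (auto simp: less4)
lemma v2_expand: "v \<in> carrier_vec 2 \<Longrightarrow> v = v2 [v $ 0, v $ 1]"
  unfolding v2_def by (rule eq_vecI) (auto simp: less2)
lemma zero4: "0\<^sub>v 4 = v4 [0,0,0,0]" unfolding v4_def by (rule eq_vecI) (auto simp: less4)
lemma zero2: "0\<^sub>v 2 = v2 [0,0]" unfolding v2_def by (rule eq_vecI) (auto simp: less2)
lemma one_smult4: "(1::real) \<cdot>\<^sub>v v = v" by simp

lemma dim_m4: "dim_row (m4 xs) = 4" unfolding m4_def by simp

lemma plus_minus_one: "C \<in> carrier_mat 2 2 \<Longrightarrow> 1\<^sub>m 2 + (C - 1\<^sub>m 2) = (C :: real mat)"
  by (rule eq_matI) auto

lemma two_by_two: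
  fixes t f i n :: real
  assumes h: "(1-t)*(1-n) - f*i = 0"
    and K: "\<And>a b. a = t*a + f*b \<Longrightarrow> b = i*a + n*b \<Longrightarrow> a = 0 \<and> b = 0"
  shows False
proof (cases "f = 0 \<and> t = 1")
  case True
  show ?thesis
  proof (cases "n = 1 \<and> i = 0")
    case True2: True
    have "(1::real) = 0 \<and> (0::real) = 0" using K[of 1 0] True True2 by simp
    then show False by simp
  next
    case False
    have a: "1 - n = t*(1-n) + f*i"
    proof -
      have "1 - n - (t*(1-n) + f*i) = (1-t)*(1-n) - f*i" by (simp add: algebra_simps)
      then show ?thesis using h by linarith
    qed
    have b: "i = i*(1-n) + n*i" by (simp add: algebra_simps)
    from K[OF a b] False show False by auto
  qed
next
  case False
  have a: "f = t*f + f*(1-t)" by (simp add: algebra_simps)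
  have b: "1 - t = i*f + n*(1-t)"
  proof -
    have "1 - t - (i*f + n*(1-t)) = (1-t)*(1-n) - f*i" by (simp add: algebra_simps)
    then show ?thesis using h by linarith
  qed
  from K[OF a b] False show False by auto
qed

lemma smult_comm2:
  fixes C D :: "real mat"
  assumes "C \<in> carrier_mat 2 2" "D \<in> carrier_mat 2 2" "w \<in> carrier_vec 2"
  shows "C *\<^sub>v (\<mu> \<cdot>\<^sub>v (D *\<^sub>v w)) = \<mu> \<cdot>\<^sub>v ((C * D) *\<^sub>v w)"
proof -
  have "C *\<^sub>v (\<mu> \<cdot>\<^sub>v (D *\<^sub>v w)) = \<mu> \<cdot>\<^sub>v (C *\<^sub>v (D *\<^sub>v w))"
    by (rule mult_mat_vec[OF assms(1) mult_mat_vec_carrier[OF assms(2,3)]])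
  also have "\<dots> = \<mu> \<cdot>\<^sub>v ((C * D) *\<^sub>v w)" using assms by (simp add: assoc_mult_mat_vec)
  finally show ?thesis .
qed

lemma linalg:
  fixes tS tC fS fC iS iC nS nC \<mu> L0 L1 L2 L3 :: real
  defines "P4 \<equiv> m4 [[tS,tC,fS,fC],[tC,tS,fC,fS],[iS,iC,nS,nC],[iC,iS,nC,nS]]"
  assumes noeig: "\<not> eigenvalue P4 1"
    and e0: "L0 = \<mu> + tS*L0 + tC*L1 + fS*L2 + fC*L3"
    and e1: "L1 = \<mu> + tC*L0 + tS*L1 + fC*L2 + fS*L3"
    and e2: "L2 = iS*L0 + iC*L1 + nS*L2 + nC*L3"
    and e3: "L3 = iC*L0 + iS*L1 + nC*L2 + nS*L3"
  shows "(\<exists>B. mat_inverse (1\<^sub>m 4 - P4) = Some B \<and> v4 [L0,L1,L2,L3] = B *\<^sub>v v4 [\<mu>,\<mu>,0,0])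
     \<and> (\<exists>C. mat_inverse ((1\<^sub>m 2 - m2 [[tS,tC],[tC,tS]]) * (1\<^sub>m 2 - m2 [[nS,nC],[nC,nS]]) - m2 [[fS,fC],[fC,fS]] * m2 [[iS,iC],[iC,iS]]) = Some C \<and>
        v2 [L0,L1] = \<mu> \<cdot>\<^sub>v (((1\<^sub>m 2 + (C - 1\<^sub>m 2)) * (1\<^sub>m 2 - m2 [[nS,nC],[nC,nS]])) *\<^sub>v v2 [1,1])
      \<and> v2 [L2,L3] = \<mu> \<cdot>\<^sub>v (((1\<^sub>m 2 + (C - 1\<^sub>m 2)) * m2 [[iS,iC],[iC,iS]]) *\<^sub>v v2 [1,1]))"
proof -
  have K: "a = 0 \<and> b = 0 \<and> c = 0 \<and> d = 0"
    if h0: "a = tS*a + tC*b + fS*c + fC*d" and h1: "b = tC*a + tS*b + fC*c + fS*d"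
      and h2: "c = iS*a + iC*b + nS*c + nC*d" and h3: "d = iC*a + iS*b + nC*c + nS*d" for a b c d
  proof (rule ccontr)
    assume nz: "\<not> (a = 0 \<and> b = 0 \<and> c = 0 \<and> d = 0)"
    have "eigenvector P4 (v4 [a,b,c,d]) 1"
      unfolding eigenvector_def P4_def
      using nz h0 h1 h2 h3 by (simp add: m4_mult_v4 zero4 v4_eq dim_m4)
    then have "eigenvalue P4 1" unfolding eigenvalue_def by blast
    then show False using noeig by simp
  qed
  let ?A = "1\<^sub>m 4 - P4"
  have A4: "?A = m4 [[1-tS,-tC,-fS,-fC],[-tC,1-tS,-fC,-fS],[-iS,-iC,1-nS,-nC],[-iC,-iS,-nC,1-nS]]"
    unfolding P4_def one4 m4_minus by simp
  have Ac: "?A \<in> carrier_mat 4 4" unfolding A4 by simp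
  have detA: "det ?A \<noteq> 0"
  proof
    assume "det ?A = 0"
    then obtain v where v: "v \<in> carrier_vec 4" "v \<noteq> 0\<^sub>v 4" "?A *\<^sub>v v = 0\<^sub>v 4"
      using det_0_iff_vec_prod_zero[OF Ac] by blast
    define a b c d where "a = v $ 0" "b = v $ 1" "c = v $ 2" "d = v $ 3"
    have vv: "v = v4 [a,b,c,d]" using v4_expand[OF v(1)] a_b_c_d_def by simp
    from v(3) have "a = tS*a + tC*b + fS*c + fC*d \<and> b = tC*a + tS*b + fC*c + fS*d \<and>
      c = iS*a + iC*b + nS*c + nC*d \<and> d = iC*a + iS*b + nC*c + nS*d"
      unfolding vv A4 m4_mult_v4 zero4 v4_eq by (simp add: algebra_simps)
    then have "a = 0 \<and> b = 0 \<and> c = 0 \<and> d = 0" using K by blast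
    then show False using v(2) vv zero4 by simp
  qed
  have U: "?A \<in> Units (ring_mat TYPE(real) 4 undefined)"
    by (rule det_non_zero_imp_unit[OF Ac detA])
  have "mat_inverse ?A \<noteq> None" using mat_inverse(1)[OF Ac, where b = undefined] U by blast
  then obtain B where B: "mat_inverse ?A = Some B" by blast
  from mat_inverse(2)[OF Ac B] have BA: "B * ?A = 1\<^sub>m 4" and Bc: "B \<in> carrier_mat 4 4" by auto
  have z0: "(1-tS)*L0 - tC*L1 - fS*L2 - fC*L3 - \<mu> = 0"
  proof -
    have "(1-tS)*L0 - tC*L1 - fS*L2 - fC*L3 - \<mu> = L0 - (\<mu> + tS*L0 + tC*L1 + fS*L2 + fC*L3)" by (simp add: algebra_simps)
    then show ?thesis using e0 by linarith
  qed
  have z1: "-tC*L0 + (1-tS)*L1 - fC*L2 - fS*L3 - \<mu> = 0"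
  proof -
    have "-tC*L0 + (1-tS)*L1 - fC*L2 - fS*L3 - \<mu> = L1 - (\<mu> + tC*L0 + tS*L1 + fC*L2 + fS*L3)" by (simp add: algebra_simps)
    then show ?thesis using e1 by linarith
  qed
  have z2: "-iS*L0 - iC*L1 + (1-nS)*L2 - nC*L3 = 0"
  proof -
    have "-iS*L0 - iC*L1 + (1-nS)*L2 - nC*L3 = L2 - (iS*L0 + iC*L1 + nS*L2 + nC*L3)" by (simp add: algebra_simps)
    then show ?thesis using e2 by linarith
  qed
  have z3: "-iC*L0 - iS*L1 - nC*L2 + (1-nS)*L3 = 0"
  proof -
    have "-iC*L0 - iS*L1 - nC*L2 + (1-nS)*L3 = L3 - (iC*L0 + iS*L1 + nC*L2 + nS*L3)" by (simp add: algebra_simps)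
    then show ?thesis using e3 by linarith
  qed
  have AL: "?A *\<^sub>v v4 [L0,L1,L2,L3] = v4 [\<mu>,\<mu>,0,0]"
    unfolding A4 m4_mult_v4 v4_eq using z0 z1 z2 z3 by (simp add: algebra_simps)
  have part1: "v4 [L0,L1,L2,L3] = B *\<^sub>v v4 [\<mu>,\<mu>,0,0]"
  proof -
    have "v4 [L0,L1,L2,L3] = (B * ?A) *\<^sub>v v4 [L0,L1,L2,L3]" unfolding BA by simp
    also have "\<dots> = B *\<^sub>v (?A *\<^sub>v v4 [L0,L1,L2,L3])"
      using Bc Ac by (simp add: assoc_mult_mat_vec)
    finally show ?thesis unfolding AL .
  qed
  define p where "p = (1-tS)*(1-nS) + tC*nC - (fS*iS + fC*iC)"
  define q where "q = -(1-tS)*nC - tC*(1-nS) - (fS*iC + fC*iS)"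
  let ?S = "(1\<^sub>m 2 - m2 [[tS,tC],[tC,tS]]) * (1\<^sub>m 2 - m2 [[nS,nC],[nC,nS]]) - m2 [[fS,fC],[fC,fS]] * m2 [[iS,iC],[iC,iS]]"
  have S2: "?S = m2 [[p,q],[q,p]]"
    unfolding one2 m2_minus m2_mult p_def q_def by (simp add: algebra_simps)
  have pq1: "p + q \<noteq> 0"
  proof
    assume h: "p + q = 0"
    show False
    proof (rule two_by_two[of "tS+tC" "nS+nC" "fS+fC" "iS+iC"])
      have "p + q = (1-(tS+tC))*(1-(nS+nC)) - (fS+fC)*(iS+iC)" unfolding p_def q_def by (simp add: algebra_simps)
      then show "(1-(tS+tC))*(1-(nS+nC)) - (fS+fC)*(iS+iC) = 0" using h by simp
    next
      fix a b assume a: "a = (tS+tC)*a + (fS+fC)*b" and b: "b = (iS+iC)*a + (nS+nC)*b"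
      have a': "a = tS*a + tC*a + fS*b + fC*b"
      proof -
        have "(tS+tC)*a + (fS+fC)*b = tS*a + tC*a + fS*b + fC*b" by (simp add: algebra_simps)
        then show ?thesis using a by linarith
      qed
      have b': "b = iS*a + iC*a + nS*b + nC*b"
      proof -
        have "(iS+iC)*a + (nS+nC)*b = iS*a + iC*a + nS*b + nC*b" by (simp add: algebra_simps)
        then show ?thesis using b by linarith
      qed
      have a1: "a = tC*a + tS*a + fC*b + fS*b" using a' by (simp add: ac_simps)
      have b1: "b = iC*a + iS*a + nC*b + nS*b" using b' by (simp add: ac_simps)
      from K[OF a' a1 b' b1] show "a = 0 \<and> b = 0" by simp
    qed
  qed
  have pq2: "p - q \<noteq> 0"
  proof
    assume h: "p - q = 0"
    show False
    proof (rule two_by_two[of "tS-tC" "nS-nC" "fS-fC" "iS-iC"])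
      have "p - q = (1-(tS-tC))*(1-(nS-nC)) - (fS-fC)*(iS-iC)" unfolding p_def q_def by (simp add: algebra_simps)
      then show "(1-(tS-tC))*(1-(nS-nC)) - (fS-fC)*(iS-iC) = 0" using h by simp
    next
      fix a b assume a: "a = (tS-tC)*a + (fS-fC)*b" and b: "b = (iS-iC)*a + (nS-nC)*b"
      have a': "a = tS*a + tC*(-a) + fS*b + fC*(-b)"
      proof -
        have "(tS-tC)*a + (fS-fC)*b = tS*a + tC*(-a) + fS*b + fC*(-b)" by (simp add: algebra_simps)
        then show ?thesis using a by linarith
      qed
      have a'': "-a = tC*a + tS*(-a) + fC*b + fS*(-b)"
      proof -
        have "(tS-tC)*a + (fS-fC)*b = -(tC*a + tS*(-a) + fC*b + fS*(-b))" by (simp add: algebra_simps)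
        then show ?thesis using a by linarith
      qed
      have b': "b = iS*a + iC*(-a) + nS*b + nC*(-b)"
      proof -
        have "(iS-iC)*a + (nS-nC)*b = iS*a + iC*(-a) + nS*b + nC*(-b)" by (simp add: algebra_simps)
        then show ?thesis using b by linarith
      qed
      have b'': "-b = iC*a + iS*(-a) + nC*b + nS*(-b)"
      proof -
        have "(iS-iC)*a + (nS-nC)*b = -(iC*a + iS*(-a) + nC*b + nS*(-b))" by (simp add: algebra_simps)
        then show ?thesis using b by linarith
      qed
      from K[OF a' a'' b' b''] show "a = 0 \<and> b = 0" by simp
    qed
  qed
  have Sc: "?S \<in> carrier_mat 2 2" unfolding S2 by simp
  have detS: "det ?S \<noteq> 0"
  proof
    assume "det ?S = 0"
    then obtain v where v: "v \<in> carrier_vec 2" "v \<noteq> 0\<^sub>v 2" "?S *\<^sub>v v = 0\<^sub>v 2"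
      using det_0_iff_vec_prod_zero[OF Sc] by blast
    define x y where "x = v $ 0" "y = v $ 1"
    have vv: "v = v2 [x,y]" using v2_expand[OF v(1)] x_y_def by simp
    from v(3) have h: "p*x + q*y = 0" "q*x + p*y = 0"
      unfolding vv S2 m2_mult_v2 zero2 v2_eq by auto
    have "(p+q)*(x+y) = 0" using h by (simp add: algebra_simps)
    then have s1: "x + y = 0" using pq1 by simp
    have "(p-q)*(x-y) = 0" using h by (simp add: algebra_simps)
    then have s2: "x - y = 0" using pq2 by simp
    from s1 s2 have "x = 0" "y = 0" by auto
    then show False using v(2) vv zero2 by simp
  qed
  have U2: "?S \<in> Units (ring_mat TYPE(real) 2 undefined)"
    by (rule det_non_zero_imp_unit[OF Sc detS])
  have "mat_inverse ?S \<noteq> None" using mat_inverse(1)[OF Sc, where b = undefined] U2 by blast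
  then obtain C where C: "mat_inverse ?S = Some C" by blast
  from mat_inverse(2)[OF Sc C] have CS: "C * ?S = 1\<^sub>m 2" and Cc: "C \<in> carrier_mat 2 2" by auto
  have E: "1\<^sub>m 2 + (C - 1\<^sub>m 2) = C" by (rule plus_minus_one[OF Cc])
  have Sx: "?S *\<^sub>v v2 [L0,L1] = \<mu> \<cdot>\<^sub>v ((1\<^sub>m 2 - m2 [[nS,nC],[nC,nS]]) *\<^sub>v v2 [1,1])"
  proof -
    have i1: "p*L0 + q*L1 - \<mu>*(1 - nS - nC) = (1-nS)*((1-tS)*L0 - tC*L1 - fS*L2 - fC*L3 - \<mu>)
       - nC*(-tC*L0 + (1-tS)*L1 - fC*L2 - fS*L3 - \<mu>) + fS*(-iS*L0 - iC*L1 + (1-nS)*L2 - nC*L3)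
       + fC*(-iC*L0 - iS*L1 - nC*L2 + (1-nS)*L3)" unfolding p_def q_def by (simp add: algebra_simps)
    have i2: "q*L0 + p*L1 - \<mu>*(1 - nS - nC) = -nC*((1-tS)*L0 - tC*L1 - fS*L2 - fC*L3 - \<mu>)
       + (1-nS)*(-tC*L0 + (1-tS)*L1 - fC*L2 - fS*L3 - \<mu>) + fC*(-iS*L0 - iC*L1 + (1-nS)*L2 - nC*L3)
       + fS*(-iC*L0 - iS*L1 - nC*L2 + (1-nS)*L3)" unfolding p_def q_def by (simp add: algebra_simps)
    have "p*L0 + q*L1 = \<mu>*(1 - nS - nC)" "q*L0 + p*L1 = \<mu>*(1 - nS - nC)"
      using i1 i2 unfolding z0 z1 z2 z3 by simp_all
    moreover have N1: "1\<^sub>m 2 - m2 [[nS,nC],[nC,nS]] = m2 [[1-nS, -nC],[-nC, 1-nS]]"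
      unfolding one2 m2_minus by simp
    ultimately show ?thesis unfolding S2 unfolding N1 m2_mult_v2 smult_v2 v2_eq by (simp add: algebra_simps)
  qed
  have Sy: "?S *\<^sub>v v2 [L2,L3] = \<mu> \<cdot>\<^sub>v (m2 [[iS,iC],[iC,iS]] *\<^sub>v v2 [1,1])"
  proof -
    have i1: "p*L2 + q*L3 - \<mu>*(iS + iC) = iS*((1-tS)*L0 - tC*L1 - fS*L2 - fC*L3 - \<mu>)
       + iC*(-tC*L0 + (1-tS)*L1 - fC*L2 - fS*L3 - \<mu>) + (1-tS)*(-iS*L0 - iC*L1 + (1-nS)*L2 - nC*L3)
       - tC*(-iC*L0 - iS*L1 - nC*L2 + (1-nS)*L3)" unfolding p_def q_def by (simp add: algebra_simps)
    have i2: "q*L2 + p*L3 - \<mu>*(iS + iC) = iC*((1-tS)*L0 - tC*L1 - fS*L2 - fC*L3 - \<mu>)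
       + iS*(-tC*L0 + (1-tS)*L1 - fC*L2 - fS*L3 - \<mu>) - tC*(-iS*L0 - iC*L1 + (1-nS)*L2 - nC*L3)
       + (1-tS)*(-iC*L0 - iS*L1 - nC*L2 + (1-nS)*L3)" unfolding p_def q_def by (simp add: algebra_simps)
    have "p*L2 + q*L3 = \<mu>*(iS + iC)" "q*L2 + p*L3 = \<mu>*(iS + iC)"
      using i1 i2 unfolding z0 z1 z2 z3 by simp_all
    then show ?thesis unfolding S2 unfolding m2_mult_v2 smult_v2 v2_eq by (simp add: algebra_simps)
  qed
  have solve: "w = C *\<^sub>v (?S *\<^sub>v w)" if "w \<in> carrier_vec 2" for w
  proof -
    have "w = (C * ?S) *\<^sub>v w" unfolding CS using that by simp
    also have "\<dots> = C *\<^sub>v (?S *\<^sub>v w)" using Cc Sc that by (simp add: assoc_mult_mat_vec)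
    finally show ?thesis .
  qed
  have X: "v2 [L0,L1] = \<mu> \<cdot>\<^sub>v ((C * (1\<^sub>m 2 - m2 [[nS,nC],[nC,nS]])) *\<^sub>v v2 [1,1])"
  proof -
    have "v2 [L0,L1] = C *\<^sub>v (\<mu> \<cdot>\<^sub>v ((1\<^sub>m 2 - m2 [[nS,nC],[nC,nS]]) *\<^sub>v v2 [1,1]))"
      using solve[of "v2 [L0,L1]"] unfolding Sx by simp
    also have "\<dots> = \<mu> \<cdot>\<^sub>v ((C * (1\<^sub>m 2 - m2 [[nS,nC],[nC,nS]])) *\<^sub>v v2 [1,1])"
      by (rule smult_comm2[OF Cc]) (auto intro: minus_carrier_mat)
    finally show ?thesis .
  qed
  have Y: "v2 [L2,L3] = \<mu> \<cdot>\<^sub>v ((C * m2 [[iS,iC],[iC,iS]]) *\<^sub>v v2 [1,1])"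
  proof -
    have "v2 [L2,L3] = C *\<^sub>v (\<mu> \<cdot>\<^sub>v (m2 [[iS,iC],[iC,iS]] *\<^sub>v v2 [1,1]))"
      using solve[of "v2 [L2,L3]"] unfolding Sy by simp
    also have "\<dots> = \<mu> \<cdot>\<^sub>v ((C * m2 [[iS,iC],[iC,iS]]) *\<^sub>v v2 [1,1])"
      by (rule smult_comm2[OF Cc]) auto
    finally show ?thesis .
  qed
  show ?thesis
  proof (rule conjI)
    show "\<exists>B. mat_inverse (1\<^sub>m 4 - P4) = Some B \<and> v4 [L0,L1,L2,L3] = B *\<^sub>v v4 [\<mu>,\<mu>,0,0]"
      using B part1 by blast
    show "\<exists>C. mat_inverse ?S = Some C \<and>
        v2 [L0,L1] = \<mu> \<cdot>\<^sub>v (((1\<^sub>m 2 + (C - 1\<^sub>m 2)) * (1\<^sub>m 2 - m2 [[nS,nC],[nC,nS]])) *\<^sub>v v2 [1,1])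
      \<and> v2 [L2,L3] = \<mu> \<cdot>\<^sub>v (((1\<^sub>m 2 + (C - 1\<^sub>m 2)) * m2 [[iS,iC],[iC,iS]]) *\<^sub>v v2 [1,1])"
      apply (rule exI[of _ C])
      unfolding E using C X Y by (intro conjI)
  qed
qed

lemma Phi_entry:
  assumes "i < 4" "j < 4"
  shows "Phi_mat Ts Tc Fs Fc Is Ic Ns Nc t $$ (i,j) =
    [[Ts t, Tc t, Fs t, Fc t],[Tc t,Ts t,Fc t,Fs t],[Is t,Ic t,Ns t,Nc t],[Ic t,Is t,Nc t,Ns t]] ! i ! j"
proof -
  have d: "dim_row (blk2 a b) = 2" "dim_col (blk2 a b) = 2" for a b unfolding blk2_def by simp_all
  show ?thesis using assms unfolding Phi_mat_def
    by (auto simp: less4 d blk2_def)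
qed

lemma Phi_sel:
  assumes "i < 4" "j < 4"
  shows "\<exists>g \<in> {Ts, Tc, Fs, Fc, Is, Ic, Ns, Nc}. (\<lambda>t. Phi_mat Ts Tc Fs Fc Is Ic Ns Nc t $$ (i,j)) = g"
  using assms unfolding Phi_entry[OF assms] less4 by auto

lemma fhat4:
  "fhat0 4 (Phi_mat Ts Tc Fs Fc Is Ic Ns Nc) = m4
    [[integral\<^sup>L lborel Ts, integral\<^sup>L lborel Tc, integral\<^sup>L lborel Fs, integral\<^sup>L lborel Fc],
     [integral\<^sup>L lborel Tc, integral\<^sup>L lborel Ts, integral\<^sup>L lborel Fc, integral\<^sup>L lborel Fs],
     [integral\<^sup>L lborel Is, integral\<^sup>L lborel Ic, integral\<^sup>L lborel Ns, integral\<^sup>L lborel Nc],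
     [integral\<^sup>L lborel Ic, integral\<^sup>L lborel Is, integral\<^sup>L lborel Nc, integral\<^sup>L lborel Ns]]"
  unfolding fhat0_def m4_def
proof (rule eq_matI)
  fix i j assume ij: "i < dim_row (mat 4 4 (\<lambda>(i,j). [[integral\<^sup>L lborel Ts, integral\<^sup>L lborel Tc, integral\<^sup>L lborel Fs, integral\<^sup>L lborel Fc],
     [integral\<^sup>L lborel Tc, integral\<^sup>L lborel Ts, integral\<^sup>L lborel Fc, integral\<^sup>L lborel Fs],
     [integral\<^sup>L lborel Is, integral\<^sup>L lborel Ic, integral\<^sup>L lborel Ns, integral\<^sup>L lborel Nc],
     [integral\<^sup>L lborel Ic, integral\<^sup>L lborel Is, integral\<^sup>L lborel Nc, integral\<^sup>L lborel Ns]] ! i ! j))"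
    "j < dim_col (mat 4 4 (\<lambda>(i,j). [[integral\<^sup>L lborel Ts, integral\<^sup>L lborel Tc, integral\<^sup>L lborel Fs, integral\<^sup>L lborel Fc],
     [integral\<^sup>L lborel Tc, integral\<^sup>L lborel Ts, integral\<^sup>L lborel Fc, integral\<^sup>L lborel Fs],
     [integral\<^sup>L lborel Is, integral\<^sup>L lborel Ic, integral\<^sup>L lborel Ns, integral\<^sup>L lborel Nc],
     [integral\<^sup>L lborel Ic, integral\<^sup>L lborel Is, integral\<^sup>L lborel Nc, integral\<^sup>L lborel Ns]] ! i ! j))"
  then have i: "i < 4" and j: "j < 4" by auto
  show "mat 4 4 (\<lambda>(i, j). integral\<^sup>L lborel (\<lambda>t. Phi_mat Ts Tc Fs Fc Is Ic Ns Nc t $$ (i, j))) $$ (i, j) =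
    mat 4 4 (\<lambda>(i,j). [[integral\<^sup>L lborel Ts, integral\<^sup>L lborel Tc, integral\<^sup>L lborel Fs, integral\<^sup>L lborel Fc],
     [integral\<^sup>L lborel Tc, integral\<^sup>L lborel Ts, integral\<^sup>L lborel Fc, integral\<^sup>L lborel Fs],
     [integral\<^sup>L lborel Is, integral\<^sup>L lborel Ic, integral\<^sup>L lborel Ns, integral\<^sup>L lborel Nc],
     [integral\<^sup>L lborel Ic, integral\<^sup>L lborel Is, integral\<^sup>L lborel Nc, integral\<^sup>L lborel Ns]] ! i ! j) $$ (i, j)"
    using i j by (auto simp: less4 Phi_entry)
qed auto

lemma fhat2:
  "fhat0 2 (\<lambda>t. blk2 (f t) (g t)) = m2 [[integral\<^sup>L lborel f, integral\<^sup>L lborel g],[integral\<^sup>L lborel g, integral\<^sup>L lborel f]]"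
  unfolding fhat0_def m2_def blk2_def
  by (rule eq_matI) (auto simp: less2)

lemma m4_index: "i < 4 \<Longrightarrow> j < 4 \<Longrightarrow> m4 xs $$ (i,j) = xs ! i ! j"
  unfolding m4_def by simp

lemma vec4_conv: "vec 4 f = v4 [f 0, f 1, f 2, f 3]"
  unfolding v4_def by (rule eq_vecI) (auto simp: less4)
lemma vec2_lo: "vec 2 (\<lambda>i. v4 [a,b,c,d] $ i) = v2 [a,b]"
  unfolding v4_def v2_def by (rule eq_vecI) (auto simp: less2)
lemma vec2_hi: "vec 2 (\<lambda>i. v4 [a,b,c,d] $ (i+2)) = v2 [c,d]"
  unfolding v4_def v2_def by (rule eq_vecI) (auto simp: less2)
lemma vec2_one: "vec 2 (\<lambda>_. 1::real) = v2 [1,1]"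
  unfolding v2_def by (rule eq_vecI) (auto simp: less2)
lemma sumlt4: "(\<Sum>j<4::nat. f j) = f 0 + f 1 + f 2 + f 3"
  by (simp add: eval_nat_numeral)

theorem proposition2:
  fixes Pr :: "'w measure"
    and N :: "'w \<Rightarrow> nat \<Rightarrow> real measure"
    and \<mu> :: real
    and Ts Tc Fs Fc Is Ic Ns Nc :: "real \<Rightarrow> real"
  defines "M \<equiv> vec 4 (\<lambda>i. if i < 2 then \<mu> else 0)"
    and "Phi \<equiv> Phi_mat Ts Tc Fs Fc Is Ic Ns Nc"
    and "lam \<equiv> hawkes_intensity (vec 4 (\<lambda>i. if i < 2 then \<mu> else 0))
                    (Phi_mat Ts Tc Fs Fc Is Ic Ns Nc) N"
  assumes prob: "prob_space Pr"
    and mu_pos: "\<mu> > 0"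
    and kernels: "\<forall>f \<in> {Ts, Tc, Fs, Fc, Is, Ic, Ns, Nc}.
        f \<in> borel_measurable borel \<and> (\<forall>t. 0 \<le> f t) \<and> (\<forall>t < 0. f t = 0) \<and> integrable lborel f"
    and eig: "\<forall>c. eigenvalue (map_mat complex_of_real (fhat0 4 Phi)) c \<longrightarrow> cmod c < 1"
    and N_sets: "\<forall>w j. j < 4 \<longrightarrow> sets (N w j) = sets borel"
    and N_counting: "\<forall>w j (a::real) b. j < 4 \<longrightarrow> emeasure (N w j) {a..b} \<in> range of_nat"
    and N_meas: "\<forall>j < 4. \<forall>A \<in> sets borel. (\<lambda>w. emeasure (N w j) A) \<in> borel_measurable Pr"
    and lam_meas: "\<forall>i < 4. (\<lambda>(w, t). lam w i t) \<in> borel_measurable (Pr \<Otimes>\<^sub>M lborel)"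
    and intensity: "\<forall>i < 4. \<forall>A \<in> sets borel.
        (\<integral>\<^sup>+ w. emeasure (N w i) A \<partial>Pr) = (\<integral>\<^sup>+ w. (\<integral>\<^sup>+ t\<in>A. lam w i t \<partial>lborel) \<partial>Pr)"
    and stationary: "\<forall>i < 4. \<forall>t. (\<integral>\<^sup>+ w. lam w i t \<partial>Pr) = (\<integral>\<^sup>+ w. lam w i 0 \<partial>Pr)"
    and finite_mean: "\<forall>i < 4. (\<integral>\<^sup>+ w. lam w i 0 \<partial>Pr) < \<infinity>"
  shows "let Lam = vec 4 (\<lambda>i. enn2real (\<integral>\<^sup>+ w. lam w i 0 \<partial>Pr));
             PhiT = fhat0 2 (\<lambda>t. blk2 (Ts t) (Tc t));
             PhiF = fhat0 2 (\<lambda>t. blk2 (Fs t) (Fc t));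
             PhiI = fhat0 2 (\<lambda>t. blk2 (Is t) (Ic t));
             PhiN = fhat0 2 (\<lambda>t. blk2 (Ns t) (Nc t));
             v = vec 2 (\<lambda>_. 1 :: real)
         in (\<exists>B. mat_inverse (1\<^sub>m 4 - fhat0 4 Phi) = Some B \<and> Lam = B *\<^sub>v M)
          \<and> (\<exists>C. mat_inverse ((1\<^sub>m 2 - PhiT) * (1\<^sub>m 2 - PhiN) - PhiF * PhiI) = Some C \<and>
               (let D = C - 1\<^sub>m 2 in
                  vec 2 (\<lambda>i. Lam $ i) = \<mu> \<cdot>\<^sub>v (((1\<^sub>m 2 + D) * (1\<^sub>m 2 - PhiN)) *\<^sub>v v)
                \<and> vec 2 (\<lambda>i. Lam $ (i + 2)) = \<mu> \<cdot>\<^sub>v (((1\<^sub>m 2 + D) * PhiI) *\<^sub>v v)))"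
proof -
  interpret P: prob_space Pr by (rule prob)
  have kern: "g \<in> borel_measurable borel \<and> (\<forall>t. 0 \<le> g t) \<and> (\<forall>t<0. g t = 0) \<and> integrable lborel g"
    if "g \<in> {Ts,Tc,Fs,Fc,Is,Ic,Ns,Nc}" for g
    using kernels that by blast
  define Lv where "Lv = (\<lambda>j. \<integral>\<^sup>+ w. lam w j 0 \<partial>Pr)"
  define L where "L = (\<lambda>j. enn2real (Lv j))"
  have LvL: "Lv j = ennreal (L j)" if "j < 4" for j
    using finite_mean that unfolding Lv_def L_def by simp
  have L_nn: "0 \<le> L j" for j unfolding L_def by simp
  define ph where "ph = (\<lambda>i j. fhat0 4 Phi $$ (i,j))"
  define f where "f = (\<lambda>i j s. ennreal (Phi_mat Ts Tc Fs Fc Is Ic Ns Nc (0 - s) $$ (i,j)) * indicator {..<0::real} s)"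
  have Xj: "(\<lambda>w. \<integral>\<^sup>+ s. f i j s \<partial>N w j) \<in> borel_measurable Pr \<and>
            (\<integral>\<^sup>+ w. (\<integral>\<^sup>+ s. f i j s \<partial>N w j) \<partial>Pr) = Lv j * ennreal (ph i j) \<and> 0 \<le> ph i j"
    if i: "i < 4" and j: "j < 4" for i j
  proof -
    obtain g where g: "g \<in> {Ts,Tc,Fs,Fc,Is,Ic,Ns,Nc}" and pg: "(\<lambda>t. Phi_mat Ts Tc Fs Fc Is Ic Ns Nc t $$ (i,j)) = g"
      using Phi_sel[OF i j] by (rule bexE)
    have pg': "Phi_mat Ts Tc Fs Fc Is Ic Ns Nc t $$ (i,j) = g t" for t using pg by metis
    note gk = kern[OF g]
    have gm[measurable]: "g \<in> borel_measurable borel" using gk by blast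
    have fe: "f i j = (\<lambda>s. ennreal (g (0 - s)) * indicator {..<0} s)"
      unfolding f_def pg' ..
    have fm: "f i j \<in> borel_measurable borel" unfolding fe by measurable
    have phg: "ph i j = integral\<^sup>L lborel g"
      unfolding ph_def fhat0_def Phi_def using i j by (simp add: pg')
    have mean: "(\<integral>\<^sup>+ w. emeasure (N w j) A \<partial>Pr) = Lv j * emeasure lborel A" if A: "A \<in> sets borel" for A
    proof -
      have "(\<integral>\<^sup>+ w. emeasure (N w j) A \<partial>Pr) = (\<integral>\<^sup>+ w. (\<integral>\<^sup>+ t\<in>A. lam w j t \<partial>lborel) \<partial>Pr)"
        using intensity j A by blast
      also have "\<dots> = Lv j * emeasure lborel A"
      proof (rule mean_lemma[OF prob _ _ A])
        show "(\<lambda>(w, t). lam w j t) \<in> borel_measurable (Pr \<Otimes>\<^sub>M lborel)" using lam_meas j by blast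
        show "(\<integral>\<^sup>+ w. lam w j t \<partial>Pr) = Lv j" for t using stationary j unfolding Lv_def by blast
      qed
      finally show ?thesis .
    qed
    have C: "(\<lambda>w. \<integral>\<^sup>+ s. f i j s \<partial>N w j) \<in> borel_measurable Pr \<and>
         (\<integral>\<^sup>+ w. (\<integral>\<^sup>+ s. f i j s \<partial>N w j) \<partial>Pr) = Lv j * (\<integral>\<^sup>+ s. f i j s \<partial>lborel)"
    proof (rule campbell[where Nj = "\<lambda>w. N w j"])
      show "sets (N w j) = sets borel" for w using N_sets j by blast
      show "(\<lambda>w. emeasure (N w j) A) \<in> borel_measurable Pr" if "A \<in> sets borel" for A
        using N_meas j that by blast
      show "(\<integral>\<^sup>+ w. emeasure (N w j) A \<partial>Pr) = Lv j * emeasure lborel A" if "A \<in> sets borel" for A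
        by (rule mean[OF that])
      show "f i j \<in> borel_measurable borel" by (rule fm)
    qed
    have "(\<integral>\<^sup>+ s. f i j s \<partial>lborel) = ennreal (integral\<^sup>L lborel g)"
      unfolding fe using gk by (intro kernel_int) auto
    moreover have "0 \<le> ph i j" unfolding phg using gk by (intro integral_nonneg_AE) auto
    ultimately show ?thesis using C unfolding phg by simp
  qed
  have lam0: "lam w i 0 = ennreal (M $ i) + (\<Sum>j<4. \<integral>\<^sup>+ s. f i j s \<partial>N w j)" for w i
    unfolding lam_def hawkes_intensity_def M_def f_def ..
  have key: "Lv i = ennreal (M $ i) + (\<Sum>j<4. Lv j * ennreal (ph i j))" if i: "i < 4" for i
  proof -
    have "Lv i = (\<integral>\<^sup>+ w. ennreal (M $ i) + (\<Sum>j<4. \<integral>\<^sup>+ s. f i j s \<partial>N w j) \<partial>Pr)"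
      unfolding Lv_def lam0 ..
    also have "\<dots> = (\<integral>\<^sup>+ w. ennreal (M $ i) \<partial>Pr) + (\<integral>\<^sup>+ w. (\<Sum>j<4. \<integral>\<^sup>+ s. f i j s \<partial>N w j) \<partial>Pr)"
    proof (rule nn_integral_add)
      show "(\<lambda>w. ennreal (M $ i)) \<in> borel_measurable Pr" by simp
      show "(\<lambda>w. \<Sum>j<4. \<integral>\<^sup>+ s. f i j s \<partial>N w j) \<in> borel_measurable Pr"
        using Xj[OF i] by (intro borel_measurable_sum) auto
    qed
    also have "(\<integral>\<^sup>+ w. (\<Sum>j<4. \<integral>\<^sup>+ s. f i j s \<partial>N w j) \<partial>Pr) = (\<Sum>j<4. \<integral>\<^sup>+ w. (\<integral>\<^sup>+ s. f i j s \<partial>N w j) \<partial>Pr)"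
      using Xj[OF i] by (intro nn_integral_sum) auto
    also have "\<dots> = (\<Sum>j<4. Lv j * ennreal (ph i j))"
      using Xj[OF i] by (intro sum.cong) auto
    also have "(\<integral>\<^sup>+ w. ennreal (M $ i) \<partial>Pr) = ennreal (M $ i)"
      by (simp add: P.emeasure_space_1)
    finally show ?thesis .
  qed
  have M_nn: "0 \<le> M $ i" if "i < 4" for i unfolding M_def using that mu_pos by simp
  have req: "L i = M $ i + (\<Sum>j<4. L j * ph i j)" if i: "i < 4" for i
  proof -
    have ph_nn: "j < 4 \<Longrightarrow> 0 \<le> ph i j" for j using Xj[OF i] by blast
    have "ennreal (L i) = ennreal (M $ i) + (\<Sum>j<4. ennreal (L j) * ennreal (ph i j))"
      using key[OF i] LvL i by simp
    also have "(\<Sum>j<4. ennreal (L j) * ennreal (ph i j)) = (\<Sum>j<4. ennreal (L j * ph i j))"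
      using L_nn ph_nn by (intro sum.cong) (auto simp: ennreal_mult)
    also have "\<dots> = ennreal (\<Sum>j<4. L j * ph i j)"
      using L_nn ph_nn by (intro sum_ennreal) auto
    also have "ennreal (M $ i) + \<dots> = ennreal (M $ i + (\<Sum>j<4. L j * ph i j))"
      using M_nn[OF i] L_nn ph_nn by (intro ennreal_plus[symmetric]) (auto intro!: sum_nonneg mult_nonneg_nonneg)
    finally have E: "ennreal (L i) = ennreal (M $ i + (\<Sum>j<4. L j * ph i j))" .
    have S_nn: "0 \<le> (\<Sum>j<4. L j * ph i j)"
      by (intro sum_nonneg mult_nonneg_nonneg L_nn ph_nn) simp
    have "0 \<le> M $ i + (\<Sum>j<4. L j * ph i j)" using S_nn M_nn[OF i] by linarith
    then show ?thesis
      using E L_nn[of i] by simp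
  qed
  define tS where "tS = integral\<^sup>L lborel Ts"
  define tC where "tC = integral\<^sup>L lborel Tc"
  define fS where "fS = integral\<^sup>L lborel Fs"
  define fC where "fC = integral\<^sup>L lborel Fc"
  define iS where "iS = integral\<^sup>L lborel Is"
  define iC where "iC = integral\<^sup>L lborel Ic"
  define nS where "nS = integral\<^sup>L lborel Ns"
  define nC where "nC = integral\<^sup>L lborel Nc"
  have F4: "fhat0 4 Phi = m4 [[tS,tC,fS,fC],[tC,tS,fC,fS],[iS,iC,nS,nC],[iC,iS,nC,nS]]"
    unfolding Phi_def fhat4 tS_def tC_def fS_def fC_def iS_def iC_def nS_def nC_def ..
  have phe: "ph i j = [[tS,tC,fS,fC],[tC,tS,fC,fS],[iS,iC,nS,nC],[iC,iS,nC,nS]] ! i ! j" if "i < 4" "j < 4" for i j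
    unfolding ph_def F4 using that by (rule m4_index)
  have e0: "L 0 = \<mu> + tS * L 0 + tC * L 1 + fS * L 2 + fC * L 3"
    using req[of 0] unfolding sumlt4 by (simp add: phe M_def mult.commute)
  have e1: "L 1 = \<mu> + tC * L 0 + tS * L 1 + fC * L 2 + fS * L 3"
    using req[of 1] unfolding sumlt4 by (simp add: phe M_def mult.commute)
  have e2: "L 2 = iS * L 0 + iC * L 1 + nS * L 2 + nC * L 3"
    using req[of 2] unfolding sumlt4 by (simp add: phe M_def mult.commute)
  have e3: "L 3 = iC * L 0 + iS * L 1 + nC * L 2 + nS * L 3"
    using req[of 3] unfolding sumlt4 by (simp add: phe M_def mult.commute)
  have noeig: "\<not> eigenvalue (m4 [[tS,tC,fS,fC],[tC,tS,fC,fS],[iS,iC,nS,nC],[iC,iS,nC,nS]]) 1"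
  proof
    assume ev: "eigenvalue (m4 [[tS,tC,fS,fC],[tC,tS,fC,fS],[iS,iC,nS,nC],[iC,iS,nC,nS]]) 1"
    have "eigenvalue (map_mat complex_of_real (m4 [[tS,tC,fS,fC],[tC,tS,fC,fS],[iS,iC,nS,nC],[iC,iS,nC,nS]])) (complex_of_real 1)"
      by (rule of_real_hom.eigenvalue_hom[OF carrier_m4 ev])
    then have "cmod (complex_of_real 1) < 1" using eig unfolding F4 by blast
    then show False by simp
  qed
  have LamE: "vec 4 (\<lambda>i. enn2real (\<integral>\<^sup>+ w. lam w i 0 \<partial>Pr)) = v4 [L 0, L 1, L 2, L 3]"
    unfolding vec4_conv L_def Lv_def ..
  have ME: "M = v4 [\<mu>, \<mu>, 0, 0]" unfolding M_def vec4_conv by simp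
  have F4': "fhat0 4 (Phi_mat Ts Tc Fs Fc Is Ic Ns Nc) = m4 [[tS,tC,fS,fC],[tC,tS,fC,fS],[iS,iC,nS,nC],[iC,iS,nC,nS]]"
    using F4 unfolding Phi_def .
  have FT: "fhat0 2 (\<lambda>t. blk2 (Ts t) (Tc t)) = m2 [[tS,tC],[tC,tS]]" unfolding fhat2 tS_def tC_def ..
  have FF: "fhat0 2 (\<lambda>t. blk2 (Fs t) (Fc t)) = m2 [[fS,fC],[fC,fS]]" unfolding fhat2 fS_def fC_def ..
  have FI: "fhat0 2 (\<lambda>t. blk2 (Is t) (Ic t)) = m2 [[iS,iC],[iC,iS]]" unfolding fhat2 iS_def iC_def ..
  have FN: "fhat0 2 (\<lambda>t. blk2 (Ns t) (Nc t)) = m2 [[nS,nC],[nC,nS]]" unfolding fhat2 nS_def nC_def ..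
  show ?thesis
    unfolding Let_def LamE ME F4 FT FF FI FN vec2_lo vec2_hi vec2_one
    by (rule linalg[OF noeig e0 e1 e2 e3])
qed

end
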